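(* Let $G$ be a connected finite simple graph with at least one edge such that $\chi(G) = \Delta(G)$ and ${\rm vs}_{\chi}(G) = 1$. Then there exists a vertex $v \in V(G)$ with $d_G(v) = \Delta(G)$ and $\chi(G - v) = \Delta(G) - 1$.
   Context: $\chi(G)$ is the chromatic number, $\Delta(G)$ the maximum degree, and $d_G(v)$ the degree of $v$ in $G$. The chromatic vertex stability number ${\rm vs}_{\chi}(G)$ is the minimum number of vertices of $G$ whose deletion results in a graph $H$ with $\chi(H) = \chi(G)-1$. *)

theory Defs
  imports Main
begin

definition simple_graph :: "'a set \<Rightarrow> 'a set set \<Rightarrow> bool" where
  "simple_graph V E \<longleftrightarrow> finite V \<and> (\<forall>e\<in>E. e \<subseteq> V \<and> card e = 2)"

definition degree :: "'a set \<Rightarrow> 'a set set \<Rightarrow> 'a \<Rightarrow> nat" where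
  "degree V E v = card {u \<in> V. {u, v} \<in> E}"

definition max_degree :: "'a set \<Rightarrow> 'a set set \<Rightarrow> nat" where
  "max_degree V E = Max (degree V E ` V)"

definition connected_graph :: "'a set \<Rightarrow> 'a set set \<Rightarrow> bool" where
  "connected_graph V E \<longleftrightarrow> V \<noteq> {} \<and>
     (\<forall>u\<in>V. \<forall>v\<in>V. (\<lambda>x y. {x, y} \<in> E)\<^sup>*\<^sup>* u v)"

definition proper_colouring :: "'a set \<Rightarrow> 'a set set \<Rightarrow> nat \<Rightarrow> ('a \<Rightarrow> nat) \<Rightarrow> bool" where
  "proper_colouring V E k f \<longleftrightarrow> f ` V \<subseteq> {..<k} \<and>
     (\<forall>u\<in>V. \<forall>v\<in>V. {u, v} \<in> E \<longrightarrow> f u \<noteq> f v)"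

definition chromatic_number :: "'a set \<Rightarrow> 'a set set \<Rightarrow> nat" where
  "chromatic_number V E = (LEAST k. \<exists>f. proper_colouring V E k f)"

definition del_edges :: "'a set set \<Rightarrow> 'a set \<Rightarrow> 'a set set" where
  "del_edges E S = {e \<in> E. e \<inter> S = {}}"

definition chromatic_vertex_stability :: "'a set \<Rightarrow> 'a set set \<Rightarrow> nat" where
  "chromatic_vertex_stability V E =
     (LEAST n. \<exists>S \<subseteq> V. card S = n \<and>
        chromatic_number (V - S) (del_edges E S) = chromatic_number V E - 1)"

end

theory Submission
  imports Defs
begin

lemma colouring_exists:
  assumes "finite V" "\<forall>x. {x} \<notin> E"
  shows "\<exists>f. proper_colouring V E (card V) f"
proof -
  obtain f where f0: "bij_betw f V {0..<card V}"
    using ex_bij_betw_finite_nat[OF assms(1)] by (elim exE)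
  have f: "bij_betw f V {..<card V}" using f0 by (simp add: atLeast0LessThan)
  have "proper_colouring V E (card V) f"
    unfolding proper_colouring_def
  proof (intro conjI ballI impI)
    show "f ` V \<subseteq> {..<card V}" using f by (simp add: bij_betw_def)
  next
    fix u v assume uv: "u \<in> V" "v \<in> V" "{u, v} \<in> E"
    have "u \<noteq> v"
    proof
      assume "u = v"
      then have "{u} \<in> E" using uv(3) by simp
      then show False using assms(2) by blast
    qed
    moreover have "inj_on f V" using f by (simp add: bij_betw_def)
    ultimately show "f u \<noteq> f v" using uv(1,2) by (meson inj_on_contraD)
  qed
  then show ?thesis by blast
qed

lemma chrom_le:
  assumes "proper_colouring V E k f"
  shows "chromatic_number V E \<le> k"
proof -
  have "\<exists>f. proper_colouring V E k f" using assms by blast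
  then show ?thesis unfolding chromatic_number_def by (rule Least_le)
qed

lemma chrom_ex:
  assumes "proper_colouring V E k f"
  shows "\<exists>g. proper_colouring V E (chromatic_number V E) g"
proof -
  have "\<exists>k f. proper_colouring V E k f" using assms by blast
  then show ?thesis unfolding chromatic_number_def by (rule LeastI_ex)
qed

lemma chrom_ex2:
  assumes "finite V" "\<forall>x. {x} \<notin> E"
  shows "\<exists>g. proper_colouring V E (chromatic_number V E) g"
proof -
  obtain f where "proper_colouring V E (card V) f" using colouring_exists[OF assms] by blast
  then show ?thesis by (rule chrom_ex)
qed

lemma extend_col:
  assumes "proper_colouring (V - S) (del_edges E S) k f"
    and "\<forall>u\<in>S. \<forall>v\<in>S. {u, v} \<notin> E"
  shows "proper_colouring V E (Suc k) (\<lambda>x. if x \<in> S then k else f x)"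
  unfolding proper_colouring_def
proof (intro conjI ballI impI)
  show "(\<lambda>x. if x \<in> S then k else f x) ` V \<subseteq> {..<Suc k}"
    using assms(1) unfolding proper_colouring_def by auto
next
  fix u v assume uv: "u \<in> V" "v \<in> V" "{u, v} \<in> E"
  show "(if u \<in> S then k else f u) \<noteq> (if v \<in> S then k else f v)"
  proof (cases "u \<in> S")
    case True
    then have "v \<notin> S" using assms(2) uv by blast
    then show ?thesis using True assms(1) uv unfolding proper_colouring_def by auto
  next
    case False
    show ?thesis
    proof (cases "v \<in> S")
      case True
      then show ?thesis using False assms(1) uv unfolding proper_colouring_def by auto
    next
      case False2: False
      have "{u, v} \<in> del_edges E S" using uv False False2 unfolding del_edges_def by auto
      then show ?thesis using False False2 assms(1) uv unfolding proper_colouring_def by auto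
    qed
  qed
qed

lemma no_loop:
  assumes "simple_graph V E"
  shows "{x} \<notin> E"
  using assms unfolding simple_graph_def by fastforce

lemma no_loop_del:
  assumes "simple_graph V E"
  shows "{x} \<notin> del_edges E S"
  using no_loop[OF assms] unfolding del_edges_def by auto

theorem lemma3:
  fixes V :: "'a set" and E :: "'a set set"
  assumes "simple_graph V E"
    and "connected_graph V E"
    and "E \<noteq> {}"
    and "chromatic_number V E = max_degree V E"
    and "chromatic_vertex_stability V E = 1"
  shows "\<exists>v\<in>V. degree V E v = max_degree V E \<and>
           chromatic_number (V - {v}) (del_edges E {v}) = max_degree V E - 1"
proof -
  define D where "D = max_degree V E"
  have finV: "finite V" using assms(1) simple_graph_def by blast
  have Vne: "V \<noteq> {}" using assms(2) connected_graph_def by blast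
  have loops: "\<And>x. {x} \<notin> E" using no_loop[OF assms(1)] by blast
  have dle: "degree V E w \<le> D" if "w \<in> V" for w
    unfolding D_def max_degree_def using finV that by simp
  obtain e where e: "e \<in> E" using assms(3) by blast
  then have "e \<subseteq> V" "card e = 2" using assms(1) unfolding simple_graph_def by auto
  then obtain a b where ab: "e = {a, b}" "a \<noteq> b" "a \<in> V" "b \<in> V"
    using card_2_iff[of e] by auto
  have "degree V E a \<ge> 1"
  proof -
    have "b \<in> {u \<in> V. {u, a} \<in> E}" using ab e by (auto simp: insert_commute)
    moreover have "finite {u \<in> V. {u, a} \<in> E}" using finV by simp
    ultimately show ?thesis unfolding degree_def
      using card_gt_0_iff[of "{u \<in> V. {u, a} \<in> E}"] by (simp add: Suc_le_eq ex_in_conv[symmetric]) blast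
  qed
  then have D1: "D \<ge> 1" using dle[OF ab(3)] by simp
  have chiD: "chromatic_number V E = D" using assms(4) D_def by simp
  have "\<exists>S \<subseteq> V. card S = 1 \<and>
        chromatic_number (V - S) (del_edges E S) = chromatic_number V E - 1"
  proof -
    have "\<exists>S \<subseteq> V. chromatic_number (V - S) (del_edges E S) = chromatic_number V E - 1"
    proof -
      obtain f0 where f0: "proper_colouring V E D f0"
        using chrom_ex2[OF finV] loops chiD by metis
      define S where "S = {x \<in> V. f0 x = D - 1}"
      have "proper_colouring (V - S) (del_edges E S) (D - 1) f0"
        using f0 unfolding proper_colouring_def S_def del_edges_def by fastforce
      then have le: "chromatic_number (V - S) (del_edges E S) \<le> D - 1" by (rule chrom_le)
      obtain g where g: "proper_colouring (V - S) (del_edges E S) (chromatic_number (V - S) (del_edges E S)) g"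
        using chrom_ex2[of "V - S" "del_edges E S"] finV no_loop_del[OF assms(1)]
        by blast
      have ind: "\<forall>u\<in>S. \<forall>v\<in>S. {u, v} \<notin> E"
      proof (intro ballI)
        fix u v assume uv: "u \<in> S" "v \<in> S"
        then have "u \<in> V" "v \<in> V" "f0 u = f0 v" unfolding S_def by auto
        then show "{u, v} \<notin> E" using f0 unfolding proper_colouring_def by metis
      qed
      have "D \<le> Suc (chromatic_number (V - S) (del_edges E S))"
        using chrom_le[OF extend_col[OF g ind]] chiD by simp
      then have eqS: "chromatic_number (V - S) (del_edges E S) = D - 1" using le by simp
      have Ssub: "S \<subseteq> V" unfolding S_def by blast
      show ?thesis using Ssub eqS chiD by (intro exI[of _ S]) simp
    qed
    then have "\<exists>n. \<exists>S \<subseteq> V. card S = n \<and>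
        chromatic_number (V - S) (del_edges E S) = chromatic_number V E - 1" by blast
    from LeastI_ex[OF this] show ?thesis
      using assms(5) unfolding chromatic_vertex_stability_def by simp
  qed
  then obtain S where S: "S \<subseteq> V" "card S = 1"
    "chromatic_number (V - S) (del_edges E S) = chromatic_number V E - 1" by blast
  then obtain v0 where "S = {v0}" using card_1_singletonE by blast
  then have v0: "v0 \<in> V"
    "chromatic_number (V - {v0}) (del_edges E {v0}) = D - 1"
    using S chiD by auto
  define crit where "crit w \<longleftrightarrow> w \<in> V \<and>
     (\<exists>f. proper_colouring (V - {w}) (del_edges E {w}) (D - 1) f)" for w
  have cv0: "crit v0"
  proof -
    have "finite (V - {v0})" using finV by simp
    moreover have nl: "\<forall>x. {x} \<notin> del_edges E {v0}" using no_loop_del[OF assms(1)] by blast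
    ultimately obtain g where "proper_colouring (V - {v0}) (del_edges E {v0}) (chromatic_number (V - {v0}) (del_edges E {v0})) g"
      using chrom_ex2 by blast
    then have "proper_colouring (V - {v0}) (del_edges E {v0}) (D - 1) g" using v0(2) by simp
    then show ?thesis unfolding crit_def using v0(1) by (intro conjI exI)
  qed
  have crit_chi: "chromatic_number (V - {w}) (del_edges E {w}) = D - 1" if cw0: "crit w" for w
  proof -
    obtain f where f: "proper_colouring (V - {w}) (del_edges E {w}) (D - 1) f"
      using cw0 unfolding crit_def by (elim conjE exE)
    have le: "chromatic_number (V - {w}) (del_edges E {w}) \<le> D - 1" using chrom_le[OF f] .
    obtain g where g: "proper_colouring (V - {w}) (del_edges E {w}) (chromatic_number (V - {w}) (del_edges E {w})) g"
      using chrom_ex[OF f] by blast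
    have ind: "\<forall>u\<in>{w}. \<forall>v\<in>{w}. {u, v} \<notin> E" using loops by simp
    have "D \<le> Suc (chromatic_number (V - {w}) (del_edges E {w}))"
      using chrom_le[OF extend_col[OF g ind]] chiD by simp
    then show ?thesis using le by simp
  qed
  have crit_prop: "crit u" if cw: "crit w" and dw: "degree V E w < D" and uV: "u \<in> V"
    and wu: "{w, u} \<in> E" for w u
  proof -
    obtain f where f: "proper_colouring (V - {w}) (del_edges E {w}) (D - 1) f"
      using cw unfolding crit_def by (elim conjE exE)
    have wV: "w \<in> V" using cw unfolding crit_def by (elim conjE)
    define N where "N = {x \<in> V. {x, w} \<in> E}"
    have finN: "finite N" using finV N_def by simp
    have wN: "w \<notin> N" using loops N_def by auto
    have uN: "u \<in> N" using uV wu N_def by (auto simp: insert_commute)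
    have cover: "{..<D - 1} \<subseteq> f ` N"
    proof
      fix i assume i: "i \<in> {..<D - 1}"
      show "i \<in> f ` N"
      proof (rule ccontr)
        assume ni: "i \<notin> f ` N"
        have "proper_colouring V E (D - 1) (f(w := i))"
          unfolding proper_colouring_def
        proof (intro conjI ballI impI)
          show "(f(w := i)) ` V \<subseteq> {..<D - 1}"
            using f i unfolding proper_colouring_def by auto
        next
          fix x y assume xy: "x \<in> V" "y \<in> V" "{x, y} \<in> E"
          show "(f(w := i)) x \<noteq> (f(w := i)) y"
          proof (cases "x = w")
            case True
            then have "y \<noteq> w" using xy loops by auto
            moreover have "y \<in> N" using xy True N_def by (auto simp: insert_commute)
            ultimately show ?thesis using True ni by auto
          next
            case False
            show ?thesis
            proof (cases "y = w")
              case True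
              have "x \<in> N" using xy True N_def by auto
              then show ?thesis using True False ni by auto
            next
              case False2: False
              have "{x, y} \<in> del_edges E {w}" using xy False False2 del_edges_def by auto
              then show ?thesis using f xy False False2 unfolding proper_colouring_def by auto
            qed
          qed
        qed
        then have "chromatic_number V E \<le> D - 1" by (rule chrom_le)
        then have "D \<le> D - 1" using chiD by simp
        then show False using D1 by simp
      qed
    qed
    have "card N \<le> D - 1" using dw unfolding degree_def N_def by simp
    moreover have "D - 1 \<le> card (f ` N)" using card_mono[OF finite_imageI[OF finN] cover] by simp
    moreover have "card (f ` N) \<le> card N" using card_image_le[OF finN] .
    ultimately have "card (f ` N) = card N" by simp
    then have inj: "inj_on f N" using eq_card_imp_inj_on[OF finN] by blast
    have "proper_colouring (V - {u}) (del_edges E {u}) (D - 1) (f(w := f u))"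
      unfolding proper_colouring_def
    proof (intro conjI ballI impI)
      have "u \<noteq> w" using uN wN by auto
      then have "f u < D - 1" using f uV unfolding proper_colouring_def by auto
      then show "(f(w := f u)) ` (V - {u}) \<subseteq> {..<D - 1}"
        using f unfolding proper_colouring_def by auto
    next
      fix x y assume xy: "x \<in> V - {u}" "y \<in> V - {u}" "{x, y} \<in> del_edges E {u}"
      then have xyE: "{x, y} \<in> E" using del_edges_def by auto
      show "(f(w := f u)) x \<noteq> (f(w := f u)) y"
      proof (cases "x = w")
        case True
        then have "y \<noteq> w" using xyE loops by auto
        moreover have "y \<in> N" using xy xyE True N_def by (auto simp: insert_commute)
        ultimately show ?thesis using True inj uN xy unfolding inj_on_def by auto
      next
        case False
        show ?thesis
        proof (cases "y = w")
          case True
          have "x \<in> N" using xy xyE True N_def by auto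
          then show ?thesis using True False inj uN xy unfolding inj_on_def by auto
        next
          case False2: False
          have "{x, y} \<in> del_edges E {w}" using xyE False False2 del_edges_def by auto
          then show ?thesis using f xy False False2 unfolding proper_colouring_def by auto
        qed
      qed
    qed
    then show ?thesis unfolding crit_def using uV by (intro conjI exI)
  qed
  show ?thesis
  proof (rule ccontr)
    assume H: "\<not> ?thesis"
    have lt: "degree V E w < D" if cw1: "crit w" for w
    proof -
      have wV: "w \<in> V" using cw1 unfolding crit_def by (elim conjE)
      have "degree V E w \<noteq> D" using H wV crit_chi[OF cw1] unfolding D_def by blast
      then show ?thesis using dle[OF wV] by simp
    qed
    have all: "crit u" if "(\<lambda>x y. {x, y} \<in> E)\<^sup>*\<^sup>* v0 u" for u
      using that
    proof (induction rule: rtranclp_induct)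
      case base
      then show ?case using cv0 .
    next
      case (step y z)
      have "z \<in> V" using step(2) assms(1) unfolding simple_graph_def by blast
      then show ?case using crit_prop[OF step(3) lt[OF step(3)]] step(2) by blast
    qed
    obtain m where m: "m \<in> V" "degree V E m = D"
    proof -
      have "Max (degree V E ` V) \<in> degree V E ` V" using Max_in finV Vne by simp
      then obtain m where "m \<in> V" "Max (degree V E ` V) = degree V E m" by blast
      then show ?thesis using that unfolding D_def max_degree_def by simp
    qed
    have "(\<lambda>x y. {x, y} \<in> E)\<^sup>*\<^sup>* v0 m" using assms(2) v0(1) m(1) unfolding connected_graph_def by blast
    then have "crit m" by (rule all)
    then show False using lt[of m] m by simp
  qed
qed

end
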